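(* Let $\varepsilon>0$. Let $x\geqslant y\geqslant2$ with $\psi(y)>2\log x$, and let $q\geqslant1$ satisfy $P^+(q)\leqslant y$ and $\omega(q)\ll y^{1/2-(1+\varepsilon)(\log_2u)/\log u}$. Then $$D_q\ll\frac{\sqrt u}{(\log 2u)^{1/2+\varepsilon}}.$$
   Context: For a prime $p$, $\nu_p:=\lfloor\log y/\log p\rfloor$, $\psi(y):=\sum_{p\leqslant y}\nu_p\log p$, $u:=\log x/\log y$, $\log_2=\log\log$. $P^+(q)$ is the largest prime factor of $q$, $\omega(q)$ the number of its distinct prime factors. Let $p_k$ be the $k$-th prime, $p_0:=2$, $z_q:=p_{\omega(q)}$, $\vartheta_q:=\log z_q/\log y$, $\eta:=\psi(y)/\log x-2$, $$\Delta_q:=\begin{cases}\dfrac{(\log x)^{\vartheta_q}}{\log y}\Big(1+\dfrac1{\vartheta_q\log(1+\eta)}\Big)&\text{if }2\log x<\psi(y)\text{ and }y\leqslant(\log x)^2,\\[2mm] \dfrac{\vartheta_q\{u\log 2u\}^{\vartheta_q}}{1+\vartheta_q\log 2u}&\text{if }y>(\log x)^2,\end{cases}$$ and $D_q:=\min\{\omega(q),\Delta_q\}$. *)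

theory Defs
  imports Complex_Main "HOL-Computational_Algebra.Primes"
begin

definition nu :: "real \<Rightarrow> nat \<Rightarrow> int" where
  "nu y p = \<lfloor>ln y / ln (real p)\<rfloor>"

definition psi :: "real \<Rightarrow> real" where
  "psi y = (\<Sum>p\<in>{p::nat. prime p \<and> real p \<le> y}. real_of_int (nu y p) * ln (real p))"

definition u_of :: "real \<Rightarrow> real \<Rightarrow> real" where
  "u_of x y = ln x / ln y"

definition omega :: "nat \<Rightarrow> nat" where
  "omega q = card (prime_factors q)"

text \<open>k-th prime: p_1 = 2, p_2 = 3, ...; convention p_0 = 2.\<close>
definition kth_prime :: "nat \<Rightarrow> nat" where
  "kth_prime k = (if k = 0 then 2
     else (LEAST p. prime p \<and> card {r::nat. prime r \<and> r \<le> p} = k))"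

definition z_q :: "nat \<Rightarrow> nat" where
  "z_q q = kth_prime (omega q)"

definition theta_q :: "real \<Rightarrow> nat \<Rightarrow> real" where
  "theta_q y q = ln (real (z_q q)) / ln y"

definition eta :: "real \<Rightarrow> real \<Rightarrow> real" where
  "eta x y = psi y / ln x - 2"

text \<open>Delta_q; the first case applies when 2 log x < psi(y) and y <= (log x)^2,
  the second when y > (log x)^2. Outside these ranges the value is irrelevant
  (the theorem assumes psi(y) > 2 log x) and we set it to 0.\<close>
definition Delta :: "real \<Rightarrow> real \<Rightarrow> nat \<Rightarrow> real" where
  "Delta x y q =
    (let th = theta_q y q; u = u_of x y in
     if 2 * ln x < psi y \<and> y \<le> (ln x)^2 then
       (ln x) powr th / ln y * (1 + 1 / (th * ln (1 + eta x y)))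
     else if y > (ln x)^2 then
       th * (u * ln (2 * u)) powr th / (1 + th * ln (2 * u))
     else 0)"

definition D :: "real \<Rightarrow> real \<Rightarrow> nat \<Rightarrow> real" where
  "D x y q = min (real (omega q)) (Delta x y q)"

end

theory Submission
  imports Defs
begin

lemma mult_card:
  fixes p m :: nat
  assumes p: "prime p" and m: "m \<ge> 1"
  shows "multiplicity p m = card {i\<in>{1..m}. p ^ i dvd m}"
proof -
  have le: "multiplicity p m \<le> m"
  proof -
    have "p ^ multiplicity p m dvd m" by (rule multiplicity_dvd)
    hence "p ^ multiplicity p m \<le> m" using m by (intro dvd_imp_le) auto
    moreover have "multiplicity p m < p ^ multiplicity p m"
    proof -
      have "multiplicity p m < 2 ^ multiplicity p m" by (rule less_exp)
      also have "(2::nat) ^ multiplicity p m \<le> p ^ multiplicity p m"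
        using prime_ge_2_nat[OF p] by (intro power_mono) auto
      finally show ?thesis .
    qed
    ultimately show ?thesis by linarith
  qed
  have "{i\<in>{1..m}. p ^ i dvd m} = {1..multiplicity p m}"
  proof -
    have nu: "\<not> is_unit p" using p not_prime_unit by blast
    have "\<And>i. p ^ i dvd m \<longleftrightarrow> i \<le> multiplicity p m"
    proof -
      fix i
      have m0: "m \<noteq> 0" using m by simp
      show "p ^ i dvd m \<longleftrightarrow> i \<le> multiplicity p m"
        by (rule power_dvd_iff_le_multiplicity[OF m0 nu])
    qed
    note eq = this
    show ?thesis
    proof (rule set_eqI)
      fix i
      show "i \<in> {i\<in>{1..m}. p ^ i dvd m} \<longleftrightarrow> i \<in> {1..multiplicity p m}"
        using eq[of i] le by (simp only: mem_Collect_eq atLeastAtMost_iff) linarith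
    qed
  qed
  thus ?thesis by simp
qed

lemma Suc_div_eq:
  fixes n d :: nat
  assumes "d > 0"
  shows "Suc n div d = n div d + (if d dvd Suc n then 1 else 0)"
  using assms by (auto simp: div_Suc dvd_eq_mod_eq_0)

lemma legendre:
  fixes p :: nat
  assumes p: "prime p"
  shows "multiplicity p (fact n :: nat) = (\<Sum>i\<in>{1..n}. n div p ^ i)"
proof (induction n)
  case 0
  then show ?case by simp
next
  case (Suc n)
  have pos: "p > 0" using p prime_gt_0_nat by blast
  have big: "n < p ^ Suc n"
  proof -
    have "n < 2 ^ n" by (rule less_exp)
    also have "(2::nat) ^ n \<le> p ^ n"
      using prime_ge_2_nat[OF p] by (intro power_mono) auto
    also have "p ^ n \<le> p ^ Suc n" using pos by simp
    finally show ?thesis .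
  qed
  have shift: "(\<Sum>i\<in>{1..n}. n div p ^ i) = (\<Sum>i\<in>{1..Suc n}. n div p ^ i)"
  proof -
    have "(\<Sum>i\<in>{1..Suc n}. n div p ^ i) = (\<Sum>i\<in>{1..n}. n div p ^ i) + n div p ^ Suc n"
      by (subst sum.cl_ivl_Suc) simp
    moreover have "n div p ^ Suc n = 0" using big by simp
    ultimately show ?thesis by simp
  qed
  have mc: "multiplicity p (Suc n) = (\<Sum>i\<in>{1..Suc n}. if p ^ i dvd Suc n then 1 else 0)"
  proof -
    have "multiplicity p (Suc n) = card {i\<in>{1..Suc n}. p ^ i dvd Suc n}"
      using p by (intro mult_card) auto
    also have "\<dots> = (\<Sum>i\<in>{1..Suc n}. if p ^ i dvd Suc n then 1 else 0)"
      using sum.inter_filter[of "{1..Suc n}" "\<lambda>_. 1::nat" "\<lambda>i. p ^ i dvd Suc n"] by simp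
    finally show ?thesis .
  qed
  have "multiplicity p (fact (Suc n) :: nat) = multiplicity p (Suc n * fact n :: nat)"
    by simp
  also have "\<dots> = multiplicity p (Suc n) + multiplicity p (fact n :: nat)"
    using p by (intro prime_elem_multiplicity_mult_distrib) auto
  also have "\<dots> = (\<Sum>i\<in>{1..Suc n}. (if p ^ i dvd Suc n then 1 else 0) + n div p ^ i)"
    unfolding mc Suc.IH shift by (rule sum.distrib[symmetric])
  also have "\<dots> = (\<Sum>i\<in>{1..Suc n}. Suc n div p ^ i)"
  proof (intro sum.cong refl)
    fix i
    have "p ^ i > 0" using pos by simp
    from Suc_div_eq[OF this, of n]
    show "(if p ^ i dvd Suc n then 1 else 0) + n div p ^ i = Suc n div p ^ i"
      by (simp only: add.commute)
  qed
  finally show ?case .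
qed

lemma sum_ext:
  fixes p n :: nat
  assumes p: "prime p"
  shows "(\<Sum>i\<in>{1..n}. n div p ^ i) = (\<Sum>i\<in>{1..2*n}. n div p ^ i)"
proof -
  have U: "{1..2*n} = {1..n} \<union> {n<..2*n}" by auto
  have S: "(\<Sum>i\<in>{1..2*n}. n div p ^ i) = (\<Sum>i\<in>{1..n}. n div p ^ i) + (\<Sum>i\<in>{n<..2*n}. n div p ^ i)"
    unfolding U by (rule sum.union_disjoint) auto
  have "(\<Sum>i\<in>{n<..2*n}. n div p ^ i) = 0"
  proof (rule sum.neutral, rule ballI)
    fix i assume i: "i \<in> {n<..2*n}"
    have "n < 2 ^ n" by (rule less_exp)
    also have "(2::nat) ^ n \<le> p ^ n"
      using prime_ge_2_nat[OF p] by (intro power_mono) auto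
    also have "p ^ n \<le> p ^ i" using i prime_gt_0_nat[OF p] by (intro power_increasing) auto
    finally show "n div p ^ i = 0" by simp
  qed
  with S show ?thesis by simp
qed

lemma central_mult:
  fixes p n :: nat
  assumes p: "prime p" and n: "n \<ge> 1"
  shows "p ^ multiplicity p ((2*n) choose n) \<le> 2*n"
proof (rule ccontr)
  define m where "m = multiplicity p ((2*n) choose n)"
  assume "\<not> p ^ multiplicity p ((2*n) choose n) \<le> 2*n"
  hence big: "p ^ m > 2*n" unfolding m_def by simp
  have C0: "((2*n) choose n) \<noteq> 0" by simp
  have "fact n * fact (2*n - n) * ((2*n) choose n) = (fact (2*n) :: nat)"
    by (rule binomial_fact_lemma) simp
  hence "multiplicity p (fact (2*n) :: nat) = multiplicity p (fact n * fact n * ((2*n) choose n) :: nat)"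
    by simp
  also have "\<dots> = multiplicity p (fact n * fact n :: nat) + m"
    unfolding m_def using p C0 by (intro prime_elem_multiplicity_mult_distrib) auto
  also have "multiplicity p (fact n * fact n :: nat) = multiplicity p (fact n :: nat) + multiplicity p (fact n :: nat)"
    using p by (intro prime_elem_multiplicity_mult_distrib) auto
  finally have eq: "(\<Sum>i\<in>{1..2*n}. 2*n div p ^ i) = 2 * (\<Sum>i\<in>{1..2*n}. n div p ^ i) + m"
    unfolding legendre[OF p] sum_ext[OF p, of n] by simp
  define t where "t i = 2*n div p ^ i - 2 * (n div p ^ i)" for i
  have tle: "t i \<le> 1" for i
  proof -
    have d: "p ^ i > 0" using prime_gt_0_nat[OF p] by simp
    have "n < (n div p ^ i + 1) * p ^ i"
      using div_less_iff_less_mult[OF d, of n "n div p ^ i + 1"] by simp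
    hence "2*n < (2 * (n div p ^ i) + 2) * p ^ i" by (simp add: algebra_simps)
    hence "2*n div p ^ i < 2 * (n div p ^ i) + 2"
      using div_less_iff_less_mult[OF d] by blast
    thus ?thesis unfolding t_def by linarith
  qed
  have tge: "2*n div p ^ i \<ge> 2 * (n div p ^ i)" for i
  proof -
    have d: "p ^ i > 0" using prime_gt_0_nat[OF p] by simp
    have "n div p ^ i * p ^ i \<le> n" by (rule div_times_less_eq_dividend)
    hence "2 * (n div p ^ i) * p ^ i \<le> 2 * n" by simp
    hence "(2 * (n div p ^ i) * p ^ i) div p ^ i \<le> (2*n) div p ^ i" by (rule div_le_mono)
    thus ?thesis using d by (simp only: nonzero_mult_div_cancel_right[OF d[THEN less_imp_neq, symmetric]])
  qed
  have tz: "t i = 0" if "i \<ge> m" for i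
  proof -
    have "p ^ m \<le> p ^ i" using that prime_gt_0_nat[OF p] by (intro power_increasing) auto
    hence "2*n div p ^ i = 0" using big by simp
    thus ?thesis unfolding t_def by simp
  qed
  have "m = (\<Sum>i\<in>{1..2*n}. t i)"
  proof -
    have "(\<Sum>i\<in>{1..2*n}. t i) = (\<Sum>i\<in>{1..2*n}. 2*n div p ^ i) - (\<Sum>i\<in>{1..2*n}. 2 * (n div p ^ i))"
      unfolding t_def using tge by (intro sum_subtractf_nat) auto
    thus ?thesis using eq by (simp add: sum_distrib_left)
  qed
  also have "\<dots> = (\<Sum>i\<in>{1..2*n} \<inter> {..<m}. t i)"
    using tz by (intro sum.mono_neutral_right) (auto simp: not_less)
  also have "\<dots> \<le> (\<Sum>i\<in>{1..2*n} \<inter> {..<m}. 1)"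
    using tle by (intro sum_mono) auto
  also have "\<dots> \<le> card {1..<m}"
    unfolding card_eq_sum[symmetric] by (intro card_mono) auto
  also have "\<dots> < m" using big n
    by (cases m) auto
  finally show False by simp
qed

lemma primes_le_finite: "finite {p::nat. prime p \<and> real p \<le> y}"
proof (rule finite_subset)
  show "{p::nat. prime p \<and> real p \<le> y} \<subseteq> {..nat \<lceil>y\<rceil>}"
  proof
    fix p assume "p \<in> {p::nat. prime p \<and> real p \<le> y}"
    hence "real p \<le> y" by simp
    hence "p \<le> nat \<lceil>y\<rceil>" by linarith
    thus "p \<in> {..nat \<lceil>y\<rceil>}" by simp
  qed
qed simp

lemma nu_nonneg:
  assumes "prime p" "real p \<le> y"
  shows "nu y p \<ge> 0"
proof -
  have "real p \<ge> 2" using prime_ge_2_nat[OF assms(1)] by simp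
  hence "ln (real p) > 0" "ln y \<ge> 0" using assms(2) by auto
  thus ?thesis unfolding nu_def by simp
qed

lemma nu_ln_le:
  assumes "prime p" "real p \<le> y"
  shows "real_of_int (nu y p) * ln (real p) \<le> ln y"
proof -
  have "real p \<ge> 2" using prime_ge_2_nat[OF assms(1)] by simp
  hence lp: "ln (real p) > 0" by simp
  have "real_of_int (nu y p) \<le> ln y / ln (real p)" unfolding nu_def by simp
  hence "real_of_int (nu y p) * ln (real p) \<le> ln y / ln (real p) * ln (real p)"
    using lp by (intro mult_right_mono) auto
  thus ?thesis using lp by simp
qed

lemma psi_le_pi:
  assumes "y \<ge> 1"
  shows "psi y \<le> real (card {p::nat. prime p \<and> real p \<le> y}) * ln y"
proof -
  have "psi y \<le> (\<Sum>p\<in>{p::nat. prime p \<and> real p \<le> y}. ln y)"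
    unfolding psi_def by (intro sum_mono nu_ln_le) auto
  thus ?thesis by simp
qed

lemma psi_mono:
  assumes "1 \<le> y1" "y1 \<le> y2"
  shows "psi y1 \<le> psi y2"
proof -
  let ?S1 = "{p::nat. prime p \<and> real p \<le> y1}" and ?S2 = "{p::nat. prime p \<and> real p \<le> y2}"
  have "psi y1 \<le> (\<Sum>p\<in>?S1. real_of_int (nu y2 p) * ln (real p))"
    unfolding psi_def
  proof (intro sum_mono)
    fix p assume "p \<in> ?S1"
    hence p: "prime p" "real p \<le> y1" by auto
    have "real p \<ge> 2" using prime_ge_2_nat[OF p(1)] by simp
    hence lp: "ln (real p) > 0" by simp
    have "ln y1 \<le> ln y2" using assms by simp
    hence "ln y1 / ln (real p) \<le> ln y2 / ln (real p)" using lp by (intro divide_right_mono) auto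
    hence "nu y1 p \<le> nu y2 p" unfolding nu_def by (intro floor_mono)
    thus "real_of_int (nu y1 p) * ln (real p) \<le> real_of_int (nu y2 p) * ln (real p)"
      using lp by (intro mult_right_mono) auto
  qed
  also have "\<dots> \<le> (\<Sum>p\<in>?S2. real_of_int (nu y2 p) * ln (real p))"
  proof (intro sum_mono2 primes_le_finite)
    show "?S1 \<subseteq> ?S2" using assms by auto
    fix p assume "p \<in> ?S2 - ?S1"
    hence p: "prime p" "real p \<le> y2" by auto
    have "real p \<ge> 2" using prime_ge_2_nat[OF p(1)] by simp
    hence lp: "ln (real p) > 0" by simp
    show "0 \<le> real_of_int (nu y2 p) * ln (real p)"
      using nu_nonneg[OF p] lp by simp
  qed
  finally show ?thesis unfolding psi_def .
qed

lemma ln_central_le_psi: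
  fixes n :: nat
  assumes n: "n \<ge> 1"
  shows "ln (real ((2*n) choose n)) \<le> psi (real (2*n))"
proof -
  define Cn where "Cn = (2*n) choose n"
  have C0: "Cn > 0" unfolding Cn_def by simp
  have "Cn = (\<Prod>p \<in> prime_factors Cn. p ^ multiplicity p Cn)"
    using prime_factorization_nat[OF C0] .
  hence "real Cn = real (\<Prod>p \<in> prime_factors Cn. p ^ multiplicity p Cn)"
    by (rule arg_cong)
  also have "\<dots> = (\<Prod>p \<in> prime_factors Cn. real p ^ multiplicity p Cn)"
    by (simp only: of_nat_prod of_nat_power)
  finally have "real Cn = (\<Prod>p \<in> prime_factors Cn. real p ^ multiplicity p Cn)" .
  hence "ln (real Cn) = ln (\<Prod>p \<in> prime_factors Cn. real p ^ multiplicity p Cn)"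
    by (rule arg_cong)
  also have "\<dots> = (\<Sum>p \<in> prime_factors Cn. ln (real p ^ multiplicity p Cn))"
  proof (rule ln_prod)
    fix p assume "p \<in> prime_factors Cn"
    hence "prime p" by (rule in_prime_factors_imp_prime)
    hence "p > 0" by (rule prime_gt_0_nat)
    thus "real p ^ multiplicity p Cn \<noteq> 0" by simp
  qed simp
  also have "\<dots> = (\<Sum>p \<in> prime_factors Cn. real (multiplicity p Cn) * ln (real p))"
    by (intro sum.cong refl) (simp add: ln_realpow prime_gt_0_nat)
  also have "\<dots> \<le> (\<Sum>p \<in> prime_factors Cn. real_of_int (nu (real (2*n)) p) * ln (real p))"
  proof (intro sum_mono)
    fix p assume pf: "p \<in> prime_factors Cn"
    hence p: "prime p" by auto
    have "real p \<ge> 2" using prime_ge_2_nat[OF p] by simp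
    hence lp: "ln (real p) > 0" by simp
    have "p ^ multiplicity p Cn \<le> 2*n" unfolding Cn_def by (rule central_mult[OF p n])
    hence "real p ^ multiplicity p Cn \<le> real (2*n)" by (metis of_nat_le_iff of_nat_power)
    hence "ln (real p ^ multiplicity p Cn) \<le> ln (real (2*n))"
      using \<open>real p \<ge> 2\<close> n by (subst ln_le_cancel_iff) auto
    hence "real (multiplicity p Cn) * ln (real p) \<le> ln (real (2*n))"
      using \<open>real p \<ge> 2\<close> by (simp add: ln_realpow)
    hence "real (multiplicity p Cn) \<le> ln (real (2*n)) / ln (real p)"
      using lp by (simp add: field_simps)
    hence "int (multiplicity p Cn) \<le> nu (real (2*n)) p" unfolding nu_def
      by (simp add: le_floor_iff)
    hence "real (multiplicity p Cn) \<le> real_of_int (nu (real (2*n)) p)" by linarith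
    thus "real (multiplicity p Cn) * ln (real p) \<le> real_of_int (nu (real (2*n)) p) * ln (real p)"
      using lp by (intro mult_right_mono) auto
  qed
  also have "\<dots> \<le> psi (real (2*n))" unfolding psi_def
  proof (intro sum_mono2 primes_le_finite)
    show "prime_factors Cn \<subseteq> {p::nat. prime p \<and> real p \<le> real (2*n)}"
    proof
      fix p assume pf: "p \<in> prime_factors Cn"
      hence p: "prime p" by auto
      have "p dvd Cn" using pf by (rule in_prime_factors_imp_dvd)
      hence "multiplicity p Cn > 0"
        using prime_multiplicity_gt_zero_iff[of p Cn] p C0 by simp
      hence "multiplicity p Cn \<ge> 1" by simp
      hence "p ^ 1 \<le> p ^ multiplicity p Cn" using prime_gt_0_nat[OF p] by (intro power_increasing) auto
      also have "\<dots> \<le> 2*n" unfolding Cn_def by (rule central_mult[OF p n])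
      finally show "p \<in> {p::nat. prime p \<and> real p \<le> real (2*n)}" using p by simp
    qed
    fix p assume "p \<in> {p::nat. prime p \<and> real p \<le> real (2*n)} - prime_factors Cn"
    hence p: "prime p" "real p \<le> real (2*n)" by auto
    have "real p \<ge> 2" using prime_ge_2_nat[OF p(1)] by simp
    hence lp: "ln (real p) > 0" by simp
    show "0 \<le> real_of_int (nu (real (2*n)) p) * ln (real p)"
      using nu_nonneg[OF p] lp by simp
  qed
  finally show ?thesis unfolding Cn_def .
qed

lemma ln4_ge: "ln (4::real) \<ge> 6/5"
proof -
  have "1 + (-1/5::real) \<le> exp (-1/5)" by (rule exp_ge_add_one_self)
  hence e1: "exp (-1/5::real) \<ge> 4/5" by simp
  have "exp (1/5::real) = 1 / exp (-1/5)" by (simp add: exp_minus field_simps)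
  also have "\<dots> \<le> 1 / (4/5)" using e1 by (intro divide_left_mono) auto
  finally have e2: "exp (1/5::real) \<le> 5/4" by simp
  have "exp (6/5::real) = exp (real 6 * (1/5))" by simp
  also have "\<dots> = exp (1/5) ^ 6" by (rule exp_of_nat_mult)
  also have "\<dots> \<le> (5/4) ^ 6" using e2 by (intro power_mono) auto
  also have "\<dots> \<le> 4" by (simp add: power_divide)
  finally have "exp (6/5::real) \<le> 4" .
  thus ?thesis by (metis exp_le_cancel_iff exp_ln zero_less_numeral)
qed

lemma ln2_ge: "ln (2::real) \<ge> 3/5"
proof -
  have "ln (4::real) = ln 2 + ln 2" using ln_mult[of 2 2] by simp
  thus ?thesis using ln4_ge by simp
qed

lemma ln_le_half: assumes "x > 0" shows "ln (x::real) \<le> x / 2"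
proof -
  have "ln (x/2) \<le> x/2 - 1" using assms by (intro ln_le_minus_one) auto
  moreover have "ln (x/2) = ln x - ln 2" using assms by (simp add: ln_div)
  moreover have "ln (2::real) \<le> 1" using ln_le_minus_one[of 2] by simp
  ultimately show ?thesis by simp
qed

lemma psi_lower:
  assumes y: "y \<ge> 4"
  shows "psi y \<ge> y / 16"
proof -
  define n where "n = nat \<lfloor>y/2\<rfloor>"
  have n2: "n \<ge> 2" unfolding n_def using y by linarith
  have n1: "n \<ge> 1" using n2 by simp
  have le: "real (2*n) \<le> y" unfolding n_def using y by linarith
  have lt: "y < 2 * real n + 2" unfolding n_def using y by linarith
  have "psi (real (2*n)) \<le> psi y" using le n1 by (intro psi_mono) auto
  moreover have "ln (real ((2*n) choose n)) \<le> psi (real (2*n))" by (rule ln_central_le_psi[OF n1])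
  moreover have "ln (4^n / (2 * real n)) \<le> ln (real ((2*n) choose n))"
    using central_binomial_lower_bound[of n] n1 by (subst ln_le_cancel_iff) auto
  moreover have "ln (4^n / (2 * real n)) = real n * ln 4 - ln (2 * real n)"
    using n1 by (simp add: ln_div ln_realpow)
  moreover have "ln (2 * real n) \<le> real n" using ln_le_half[of "2 * real n"] n1 by simp
  moreover have "real n * ln 4 \<ge> real n * (6/5)" using ln4_ge by (intro mult_left_mono) auto
  ultimately have "psi y \<ge> real n / 5" by linarith
  moreover have "real n / 5 \<ge> y / 16" using lt n2 by simp
  ultimately show ?thesis by linarith
qed

definition pic :: "nat \<Rightarrow> nat" where "pic m = card {r::nat. prime r \<and> r \<le> m}"

lemma pic_step: "pic m \<le> pic (m - 1) + 1" and pic_nonprime: "\<not> prime m \<Longrightarrow> pic m = pic (m - 1)"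
proof -
  have fin: "finite {r::nat. prime r \<and> r \<le> m - 1}" by simp
  have "{r::nat. prime r \<and> r \<le> m} \<subseteq> insert m {r::nat. prime r \<and> r \<le> m - 1}" by auto
  hence "pic m \<le> card (insert m {r::nat. prime r \<and> r \<le> m - 1})" unfolding pic_def
    by (intro card_mono) auto
  also have "\<dots> \<le> pic (m - 1) + 1" unfolding pic_def using fin by (simp add: card_insert_if)
  finally show "pic m \<le> pic (m - 1) + 1" .
  assume "\<not> prime m"
  have "{r::nat. prime r \<and> r \<le> m} = {r::nat. prime r \<and> r \<le> m - 1}"
  proof (rule set_eqI)
    fix r
    show "r \<in> {r::nat. prime r \<and> r \<le> m} \<longleftrightarrow> r \<in> {r::nat. prime r \<and> r \<le> m - 1}"
    proof
      assume "r \<in> {r::nat. prime r \<and> r \<le> m}"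
      hence "prime r" "r \<le> m" by auto
      hence "r \<noteq> m" using \<open>\<not> prime m\<close> by auto
      thus "r \<in> {r::nat. prime r \<and> r \<le> m - 1}" using \<open>prime r\<close> \<open>r \<le> m\<close> by simp
    qed auto
  qed
  thus "pic m = pic (m - 1)" unfolding pic_def by simp
qed

lemma pic_le: "pic m \<le> m"
proof -
  have "{r::nat. prime r \<and> r \<le> m} \<subseteq> {1..m}" using prime_ge_1_nat by auto
  hence "pic m \<le> card {1..m}" unfolding pic_def by (intro card_mono) auto
  thus ?thesis by simp
qed

lemma pic_mono: "a \<le> b \<Longrightarrow> pic a \<le> pic b"
  unfolding pic_def by (intro card_mono) auto

lemma kth_prime_le:
  assumes k: "k \<ge> 1" and N: "pic N \<ge> k"
  shows "kth_prime k \<le> N \<and> prime (kth_prime k) \<and> k \<le> kth_prime k"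
proof -
  define m where "m = (LEAST m. pic m \<ge> k)"
  have mN: "m \<le> N" unfolding m_def by (rule Least_le) (rule N)
  have pm: "pic m \<ge> k" unfolding m_def by (rule LeastI) (rule N)
  have m0: "m \<noteq> 0"
  proof
    assume "m = 0"
    hence "{r::nat. prime r \<and> r \<le> m} = {}" using not_prime_0 by auto
    hence "pic m = 0" unfolding pic_def by simp
    thus False using pm k by simp
  qed
  have "pic (m - 1) < k"
  proof -
    have "\<not> pic (m - 1) \<ge> k" unfolding m_def
      by (rule not_less_Least) (use m0 in \<open>simp add: m_def\<close>)
    thus ?thesis by simp
  qed
  hence eqk: "pic m = k" using pic_step[of m] pm by simp
  have pr: "prime m"
  proof (rule ccontr)
    assume "\<not> prime m"
    hence "pic m = pic (m - 1)" by (rule pic_nonprime)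
    thus False using eqk \<open>pic (m - 1) < k\<close> by simp
  qed
  have ex: "prime m \<and> card {r::nat. prime r \<and> r \<le> m} = k" using pr eqk unfolding pic_def by simp
  have kk: "kth_prime k = (LEAST p. prime p \<and> card {r::nat. prime r \<and> r \<le> p} = k)"
    unfolding kth_prime_def using k by simp
  have "kth_prime k \<le> m" unfolding kk by (rule Least_le) (rule ex)
  moreover have P: "prime (kth_prime k) \<and> card {r::nat. prime r \<and> r \<le> kth_prime k} = k"
    unfolding kk by (rule LeastI) (rule ex)
  moreover have "k \<le> kth_prime k" using P pic_le[of "kth_prime k"] unfolding pic_def by simp
  ultimately show ?thesis using mN by simp
qed

lemma primes_real_eq:
  assumes "y \<ge> 0"
  shows "{p::nat. prime p \<and> real p \<le> y} = {r. prime r \<and> r \<le> nat \<lfloor>y\<rfloor>}"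
proof (rule set_eqI)
  fix p :: nat
  have "real p \<le> y \<longleftrightarrow> p \<le> nat \<lfloor>y\<rfloor>"
  proof
    assume "real p \<le> y"
    hence "int p \<le> \<lfloor>y\<rfloor>" by (simp add: le_floor_iff)
    thus "p \<le> nat \<lfloor>y\<rfloor>" by simp
  next
    assume "p \<le> nat \<lfloor>y\<rfloor>"
    hence "int p \<le> \<lfloor>y\<rfloor>" using assms by linarith
    thus "real p \<le> y" by (simp add: le_floor_iff)
  qed
  thus "p \<in> {p::nat. prime p \<and> real p \<le> y} \<longleftrightarrow> p \<in> {r. prime r \<and> r \<le> nat \<lfloor>y\<rfloor>}" by simp
qed

lemma omega_le_pic:
  assumes y: "y \<ge> 2" and q: "q \<ge> 1" and P: "\<forall>p\<in>prime_factors q. real p \<le> y"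
  shows "omega q \<le> pic (nat \<lfloor>y\<rfloor>)"
proof -
  have "prime_factors q \<subseteq> {r. prime r \<and> r \<le> nat \<lfloor>y\<rfloor>}"
    using P primes_real_eq[of y] y by auto
  hence "card (prime_factors q) \<le> card {r. prime r \<and> r \<le> nat \<lfloor>y\<rfloor>}"
    by (intro card_mono) auto
  thus ?thesis unfolding omega_def pic_def .
qed

lemma omega_le_y:
  assumes y: "y \<ge> 2" and q: "q \<ge> 1" and P: "\<forall>p\<in>prime_factors q. real p \<le> y"
  shows "real (omega q) \<le> y"
proof -
  have "omega q \<le> nat \<lfloor>y\<rfloor>" using omega_le_pic[OF assms] pic_le[of "nat \<lfloor>y\<rfloor>"] by linarith
  thus ?thesis using y by linarith
qed

lemma z_facts:
  assumes y: "y \<ge> 2" and q: "q \<ge> 1" and P: "\<forall>p\<in>prime_factors q. real p \<le> y"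
  shows "2 \<le> z_q q" and "real (z_q q) \<le> y"
    and "omega q \<ge> 1 \<Longrightarrow> real (z_q q) \<le> 18 * real (omega q) * ln y"
    and "omega q \<le> z_q q"
proof -
  define w where "w = omega q"
  define N0 where "N0 = nat \<lfloor>y\<rfloor>"
  have wN0: "w \<le> pic N0" unfolding w_def N0_def by (rule omega_le_pic[OF assms])
  have N0y: "real N0 \<le> y" unfolding N0_def using y by linarith
  have "2 \<le> z_q q \<and> real (z_q q) \<le> y \<and> omega q \<le> z_q q"
  proof (cases "w = 0")
    case True
    thus ?thesis unfolding z_q_def kth_prime_def using y w_def by simp
  next
    case False
    hence "w \<ge> 1" by simp
    from kth_prime_le[OF this wN0] have "kth_prime w \<le> N0" "prime (kth_prime w)" "w \<le> kth_prime w" by auto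
    note kf = this
    have zq: "z_q q = kth_prime w" unfolding z_q_def w_def by simp
    have "real (kth_prime w) \<le> real N0" using kf(1) by simp
    thus ?thesis unfolding zq using N0y prime_ge_2_nat[OF kf(2)] kf(3) w_def by simp
  qed
  thus "2 \<le> z_q q" "real (z_q q) \<le> y" "omega q \<le> z_q q" by auto
  assume w1': "omega q \<ge> 1"
  hence w1: "w \<ge> 1" unfolding w_def .
  define l where "l = ln y"
  have "ln 2 \<le> ln y" using y by simp
  hence l35: "l \<ge> 3/5" unfolding l_def using ln2_ge by linarith
  have "real w * l \<ge> 1 * l" using w1 l35 by (intro mult_right_mono) auto
  hence wl: "real w * l \<ge> 3/5" using l35 by linarith
  define M where "M = max 4 (nat \<lceil>16 * real w * l\<rceil>)"
  have M4: "M \<ge> 4" unfolding M_def by simp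
  have Mle: "real M \<le> 18 * real w * l"
  proof -
    have "real (nat \<lceil>16 * real w * l\<rceil>) \<le> 16 * real w * l + 1" using wl by linarith
    thus ?thesis unfolding M_def using wl by (simp add: max_def) linarith
  qed
  have Mge: "real M \<ge> 16 * real w * l" unfolding M_def by linarith
  have "kth_prime w \<le> M"
  proof (cases "N0 \<le> M")
    case True
    thus ?thesis using kth_prime_le[OF w1 wN0] by simp
  next
    case False
    hence MN: "M \<le> N0" by simp
    have Mpos: "real M \<ge> 4" using M4 by simp
    have "real M / 16 \<le> psi (real M)" using psi_lower[OF Mpos] .
    also have "\<dots> \<le> real (card {p::nat. prime p \<and> real p \<le> real M}) * ln (real M)"
      using Mpos by (intro psi_le_pi) auto
    also have "{p::nat. prime p \<and> real p \<le> real M} = {r. prime r \<and> r \<le> M}" by auto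
    finally have h: "real M / 16 \<le> real (pic M) * ln (real M)" unfolding pic_def .
    have "ln (real M) \<le> l" unfolding l_def using MN N0y Mpos by (subst ln_le_cancel_iff) auto
    hence "real (pic M) * ln (real M) \<le> real (pic M) * l" by (intro mult_left_mono) auto
    with h Mge have "16 * real w * l / 16 \<le> real (pic M) * l" by linarith
    hence "real w * l \<le> real (pic M) * l" by simp
    hence "real w \<le> real (pic M)" using l35 by (simp add: mult_le_cancel_right)
    hence "w \<le> pic M" by simp
    thus ?thesis using kth_prime_le[OF w1] by simp
  qed
  hence "real (z_q q) \<le> real M" unfolding z_q_def w_def by simp
  thus "real (z_q q) \<le> 18 * real (omega q) * ln y" using Mle unfolding w_def l_def by linarith
qed

lemma log_bound:
  fixes X Kc u \<epsilon> :: real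
  assumes X: "X > 0" and Kc: "Kc > 0" and u: "u > 1"
    and h: "ln X \<le> ln Kc + ln u / 2 - (1/2 + \<epsilon>) * ln (ln (2*u))"
  shows "X \<le> Kc * sqrt u / ln (2*u) powr (1/2 + \<epsilon>)"
proof -
  have b: "ln (2*u) > 0" using u by simp
  have R: "Kc * sqrt u / ln (2*u) powr (1/2 + \<epsilon>) > 0" using Kc u b by simp
  have "ln (Kc * sqrt u / ln (2*u) powr (1/2 + \<epsilon>)) = ln Kc + ln (sqrt u) - ln (ln (2*u) powr (1/2 + \<epsilon>))"
    using Kc u b by (simp add: ln_div ln_mult)
  also have "ln (sqrt u) = ln u / 2" using u by (simp add: ln_sqrt)
  also have "ln (ln (2*u) powr (1/2 + \<epsilon>)) = (1/2 + \<epsilon>) * ln (ln (2*u))" using b by (simp add: ln_powr)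
  finally have "ln X \<le> ln (Kc * sqrt u / ln (2*u) powr (1/2 + \<epsilon>))" using h by linarith
  thus ?thesis using X R by simp
qed

lemma gmono:
  fixes A B c :: real
  assumes A0: "A > 0" and A: "ln A \<ge> 1" and AB: "A \<le> B" and c: "c \<ge> 0"
  shows "(c + ln B) / B \<le> (c + ln A) / A"
proof -
  have B0: "B > 0" using A0 AB by simp
  have "ln (B / A) \<le> B / A - 1" using A0 B0 by (intro ln_le_minus_one) simp
  hence "ln B - ln A \<le> B / A - 1" using A0 B0 by (simp add: ln_div)
  hence "A * (ln B - ln A) \<le> A * (B / A - 1)" using A0 by (intro mult_left_mono) auto
  hence 1: "A * ln B \<le> A * ln A + B - A" using A0 by (simp add: algebra_simps)
  have "(B - A) * 1 \<le> (B - A) * ln A" using A AB by (intro mult_left_mono) auto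
  hence 2: "A * ln A + B - A \<le> B * ln A" by (simp add: algebra_simps)
  have 3: "c * A \<le> c * B" using c AB by (intro mult_left_mono) auto
  have "A * (c + ln B) \<le> B * (c + ln A)" using 1 2 3 by (simp add: algebra_simps)
  thus ?thesis using A0 B0 by (simp add: divide_simps mult.commute)
qed

lemma basic_u:
  fixes u :: real
  assumes u: "u \<ge> exp 16"
  shows "ln u \<ge> 16" "u > 1" "ln (ln u) \<ge> 0" "ln (2*u) = ln 2 + ln u"
    "ln (2*u) \<le> 2 * ln u" "ln (ln (2*u)) \<le> ln 2 + ln (ln u)" "ln (2*u) \<ge> 16"
    "ln (ln (2*u)) \<ge> 0" "ln (2*u) \<le> u" "ln (2::real) \<le> 1" "ln (2::real) > 0" "ln (2::real) \<ge> 1/2"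
proof -
  have "ln (1/2::real) \<le> 1/2 - 1" by (rule ln_le_minus_one) simp
  moreover have "ln (1/2::real) = - ln 2" by (simp add: ln_div)
  ultimately show "ln (2::real) \<ge> 1/2" by simp
  have u0: "u > 0" using u by (smt (verit) exp_gt_zero)
  show t: "ln u \<ge> 16" using u u0 by (metis ln_exp ln_le_cancel_iff exp_gt_zero)
  show "u > 1" using t u0 by (smt (verit) ln_le_zero_iff)
  show "ln (ln u) \<ge> 0" using t by simp
  show l2: "ln (2*u) = ln 2 + ln u" using u0 by (simp add: ln_mult)
  show l21: "ln (2::real) \<le> 1" using ln_le_minus_one[of 2] by simp
  show "ln (2::real) > 0" by simp
  show b2: "ln (2*u) \<le> 2 * ln u" using l2 l21 t by linarith
  show b16: "ln (2*u) \<ge> 16" using l2 t ln_gt_zero[of 2] by linarith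
  have "ln (ln (2*u)) \<le> ln (2 * ln u)" using b2 b16 by (subst ln_le_cancel_iff) auto
  also have "\<dots> = ln 2 + ln (ln u)" using t by (simp add: ln_mult)
  finally show "ln (ln (2*u)) \<le> ln 2 + ln (ln u)" .
  show "ln (ln (2*u)) \<ge> 0" using b16 by simp
  have "ln (2*u) \<le> (2*u)/2"
  proof -
    have "ln ((2*u)/2) \<le> (2*u)/2 - 1" using u0 by (intro ln_le_minus_one) auto
    thus ?thesis using l2 l21 u0 by (simp add: ln_div)
  qed
  thus "ln (2*u) \<le> u" by simp
qed

lemma case2_core:
  fixes \<epsilon> c' u l \<theta> :: real
  assumes eps: "\<epsilon> > 0" and c': "c' \<ge> 0" and u: "u \<ge> exp 16"
    and l2t: "l > 2 * ln u" and l1: "l \<ge> 1" and th0: "\<theta> > 0"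
    and thle: "\<theta> \<le> (1/2 - (1 + \<epsilon>) * ln (ln u) / ln u) + (c' + ln l) / l"
  shows "\<theta> * (u * ln (2*u)) powr \<theta> / (1 + \<theta> * ln (2*u))
     \<le> exp (c' + (1 + \<epsilon>) * ln 2) * sqrt u / ln (2*u) powr (1/2 + \<epsilon>)"
proof -
  note B = basic_u[OF u]
  define t where "t = ln u"
  define lt where "lt = ln (ln u)"
  define b where "b = ln (2*u)"
  define \<alpha> where "\<alpha> = 1/2 - (1 + \<epsilon>) * ln (ln u) / ln u"
  define g where "g = (c' + ln l) / l"
  define a where "a = u * b"
  have t16: "t \<ge> 16" unfolding t_def by (rule B(1))
  have lt0: "lt \<ge> 0" unfolding lt_def by (rule B(3))
  have b16: "b \<ge> 16" unfolding b_def by (rule B(7))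
  have lnb0: "ln b \<ge> 0" using b16 by simp
  have bu: "b \<le> u" unfolding b_def by (rule B(9))
  have lnb_lt: "ln b \<le> ln 2 + lt" unfolding b_def lt_def by (rule B(6))
  have u1: "u > 1" by (rule B(2))
  have a0: "a > 0" unfolding a_def using u1 b16 by simp
  have lna: "ln a = t + ln b" unfolding a_def t_def using u1 b16 by (simp add: ln_mult)
  have lna0: "ln a \<ge> 0" using lna t16 lnb0 by simp
  have "ln b \<le> t" unfolding t_def using bu b16 by (subst ln_le_cancel_iff) auto
  hence lna2: "ln a \<le> 2 * t" using lna by simp
  have al_t: "\<alpha> * t = t/2 - (1 + \<epsilon>) * lt" unfolding \<alpha>_def t_def lt_def using t16 t_def
    by (simp add: field_simps)
  have "(1 + \<epsilon>) * ln (ln u) / ln u \<ge> 0" using eps lt0 t16 unfolding lt_def t_def by simp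
  hence al_half: "\<alpha> \<le> 1/2" unfolding \<alpha>_def by linarith
  have g0: "g \<ge> 0" unfolding g_def using c' l1 by simp
  have "(c' + ln l) / l \<le> (c' + ln (2*t)) / (2*t)"
  proof (rule gmono)
    show "0 < 2 * t" using t16 by simp
    have "ln (2*t) \<ge> ln 2" using t16 by (subst ln_le_cancel_iff) auto
    moreover have "ln (2*t) = ln 2 + ln t" using t16 by (simp add: ln_mult)
    moreover have "ln t \<ge> ln 16" using t16 by (subst ln_le_cancel_iff) auto
    moreover have "ln (16::real) = 4 * ln 2"
    proof -
      have "ln ((2::real) ^ 4) = real 4 * ln 2" by (rule ln_realpow)
      thus ?thesis by simp
    qed
    moreover have "ln (2::real) \<ge> 0" by simp
    ultimately show "1 \<le> ln (2 * t)"
      using B(12) by linarith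
    show "2 * t \<le> l" using l2t t_def by simp
    show "c' \<ge> 0" by (rule c')
  qed
  hence "2 * t * g \<le> 2 * t * ((c' + ln (2*t)) / (2*t))" unfolding g_def using t16
    by (intro mult_left_mono) auto
  hence tg: "2 * t * g \<le> c' + ln 2 + lt" using t16 unfolding lt_def t_def by (simp add: ln_mult)
  have thle': "\<theta> \<le> \<alpha> + g" using thle unfolding \<alpha>_def g_def .
  have D1: "\<theta> * a powr \<theta> / (1 + \<theta> * b) \<le> a powr \<theta> / b"
  proof -
    have tb: "\<theta> * b > 0" using th0 b16 by simp
    have "\<theta> / (1 + \<theta> * b) \<le> 1 / b" using tb b16 by (simp add: divide_simps)
    hence "\<theta> / (1 + \<theta> * b) * a powr \<theta> \<le> 1 / b * a powr \<theta>" by (intro mult_right_mono) auto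
    thus ?thesis by simp
  qed
  have "ln (a powr \<theta> / b) = \<theta> * ln a - ln b" using a0 b16 by (simp add: ln_div ln_powr)
  also have "\<theta> * ln a \<le> (\<alpha> + g) * ln a" using thle' lna0 by (intro mult_right_mono) auto
  also have "(\<alpha> + g) * ln a = \<alpha> * t + \<alpha> * ln b + g * ln a" using lna by (simp add: algebra_simps)
  finally have s1: "ln (a powr \<theta> / b) \<le> \<alpha> * t + \<alpha> * ln b + g * ln a - ln b" by simp
  have s2: "\<alpha> * ln b \<le> 1/2 * ln b" using al_half lnb0 by (intro mult_right_mono) auto
  have s3: "g * ln a \<le> g * (2 * t)" using g0 lna2 by (intro mult_left_mono) auto
  have s4: "\<epsilon> * (ln b - ln 2) \<le> \<epsilon> * lt" using eps lnb_lt by (intro mult_left_mono) auto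
  have "ln (a powr \<theta> / b) \<le> c' + (1 + \<epsilon>) * ln 2 + t / 2 - (1/2 + \<epsilon>) * ln b"
    using s1 s2 s3 s4 al_t tg by (simp add: algebra_simps)
  hence "ln (a powr \<theta> / b) \<le> ln (exp (c' + (1 + \<epsilon>) * ln 2)) + ln u / 2 - (1/2 + \<epsilon>) * ln (ln (2*u))"
    unfolding t_def b_def by simp
  hence "a powr \<theta> / b \<le> exp (c' + (1 + \<epsilon>) * ln 2) * sqrt u / ln (2*u) powr (1/2 + \<epsilon>)"
    using a0 b16 u1 by (intro log_bound) auto
  with D1 show ?thesis unfolding a_def b_def by linarith
qed

lemma ln_facts: "ln (4::real) \<le> 2" "ln (5::real) \<le> 4" "ln (80::real) \<ge> 0" "ln (320::real) = ln 80 + ln 4"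
proof -
  have "ln (4::real) = ln 2 + ln 2" using ln_mult[of 2 2] by simp
  thus "ln (4::real) \<le> 2" using ln_le_minus_one[of 2] by simp
  show "ln (5::real) \<le> 4" using ln_le_minus_one[of 5] by simp
  show "ln (80::real) \<ge> 0" by simp
  show "ln (320::real) = ln 80 + ln 4" using ln_mult[of 80 4] by simp
qed

lemma lnl_sq: assumes "l \<ge> 1" shows "(ln l)^2 \<le> 4 * (l::real)"
proof -
  have s0: "sqrt l > 0" using assms by simp
  have "ln (sqrt l) < sqrt l" using s0 by (rule ln_less_self)
  moreover have "ln (sqrt l) = ln l / 2" using assms by (simp add: ln_sqrt)
  ultimately have "ln l \<le> 2 * sqrt l" by simp
  moreover have "ln l \<ge> 0" using assms by simp
  ultimately have "(ln l)^2 \<le> (2 * sqrt l)^2" by (intro power_mono) auto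
  also have "\<dots> = 4 * l" using assms by (simp add: power_mult_distrib)
  finally show ?thesis .
qed

lemma case1b_core:
  fixes \<epsilon> c' u l L \<theta> \<eta>' :: real
  assumes eps: "\<epsilon> > 0" and c': "c' \<ge> 0" and u: "u \<ge> exp 16"
    and ltl: "ln u \<le> l" and l4: "l \<le> 4 * ln u" and L: "L = u * l" and lnL: "ln L \<le> l + ln l"
    and th0: "\<theta> > 0"
    and thle: "\<theta> \<le> (1/2 - (1 + \<epsilon>) * ln (ln u) / ln u) + (c' + ln l) / l"
    and thl: "\<theta> * l \<ge> ln u / 4" and eta1: "\<eta>' \<ge> 1"
  shows "L powr \<theta> / l * (1 + 1 / (\<theta> * \<eta>'))
     \<le> exp (2 * c' + 11 + (1/2 + \<epsilon>) * ln 2) * sqrt u / ln (2*u) powr (1/2 + \<epsilon>)"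
proof -
  note B = basic_u[OF u]
  define t where "t = ln u"
  define lt where "lt = ln (ln u)"
  define b where "b = ln (2*u)"
  define \<alpha> where "\<alpha> = 1/2 - (1 + \<epsilon>) * ln (ln u) / ln u"
  define g where "g = (c' + ln l) / l"
  have t16: "t \<ge> 16" unfolding t_def by (rule B(1))
  have lt0: "lt \<ge> 0" unfolding lt_def by (rule B(3))
  have b16: "b \<ge> 16" unfolding b_def by (rule B(7))
  have lnb_lt: "ln b \<le> ln 2 + lt" unfolding b_def lt_def by (rule B(6))
  have u1: "u > 1" by (rule B(2))
  have l16: "l \<ge> 16" using ltl t16 t_def by simp
  have L0: "L > 0" unfolding L using u1 l16 by simp
  have lnL_eq: "ln L = t + ln l" unfolding L t_def using u1 l16 by (simp add: ln_mult)
  have lnl0: "ln l \<ge> 0" using l16 by simp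
  have lnL0: "ln L \<ge> 0" using lnL_eq t16 lnl0 by simp
  have lnl_le: "ln l \<le> l" using l16 by (simp add: ln_bound)
  have lnl_sq: "(ln l)^2 \<le> 4 * l" using l16 by (intro lnl_sq) simp
  have "ln l \<le> ln (4 * t)" using l4 l16 t_def by (subst ln_le_cancel_iff) auto
  also have "\<dots> = ln 4 + lt" unfolding lt_def t_def using t16 t_def by (simp add: ln_mult)
  finally have lnl_lt: "ln l \<le> 2 + lt" using ln_facts(1) by linarith
  have al_t: "\<alpha> * t = t/2 - (1 + \<epsilon>) * lt" unfolding \<alpha>_def t_def lt_def using t16 t_def
    by (simp add: field_simps)
  have "(1 + \<epsilon>) * ln (ln u) / ln u \<ge> 0" using eps lt0 t16 unfolding lt_def t_def by simp
  hence al_half: "\<alpha> \<le> 1/2" unfolding \<alpha>_def by linarith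
  have g0: "g \<ge> 0" unfolding g_def using c' l16 lnl0 by simp
  have gl: "g * l = c' + ln l" unfolding g_def using l16 by simp
  have glnl: "g * ln l \<le> c' + 4"
  proof -
    have "g * ln l = c' * (ln l / l) + (ln l)^2 / l" unfolding g_def using l16
      by (simp add: field_simps power2_eq_square)
    moreover have "c' * (ln l / l) \<le> c' * 1" using c' lnl_le l16 by (intro mult_left_mono) auto
    moreover have "(ln l)^2 / l \<le> 4" using lnl_sq l16 by (simp add: divide_simps)
    ultimately show ?thesis by simp
  qed
  have thle': "\<theta> \<le> \<alpha> + g" using thle unfolding \<alpha>_def g_def .
  define X where "X = L powr \<theta> * 5 / t"
  have X0: "X > 0" unfolding X_def using L0 t16 by simp
  have D1: "L powr \<theta> / l * (1 + 1 / (\<theta> * \<eta>')) \<le> X"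
  proof -
    have "\<theta> * \<eta>' \<ge> \<theta> * 1" using th0 eta1 by (intro mult_left_mono) auto
    hence "1 / (\<theta> * \<eta>') \<le> 1 / \<theta>" using th0 by (intro divide_left_mono) auto
    hence "1 + 1 / (\<theta> * \<eta>') \<le> 1 + 1 / \<theta>" by simp
    hence "L powr \<theta> / l * (1 + 1 / (\<theta> * \<eta>')) \<le> L powr \<theta> / l * (1 + 1 / \<theta>)"
      using l16 by (intro mult_left_mono) auto
    also have "L powr \<theta> / l * (1 + 1 / \<theta>) = L powr \<theta> * (1 / l + 1 / (\<theta> * l))"
      using th0 l16 by (simp add: field_simps)
    also have "1 / l + 1 / (\<theta> * l) \<le> 1 / t + 4 / t"
    proof -
      have "1 / l \<le> 1 / t" using ltl t_def t16 by (intro divide_left_mono) auto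
      moreover have "1 / (\<theta> * l) \<le> 1 / (t / 4)" using thl t_def t16 by (intro divide_left_mono) auto
      ultimately show ?thesis by simp
    qed
    hence "L powr \<theta> * (1 / l + 1 / (\<theta> * l)) \<le> L powr \<theta> * (1 / t + 4 / t)"
      by (intro mult_left_mono) auto
    also have "L powr \<theta> * (1 / t + 4 / t) = X" unfolding X_def by (simp add: field_simps)
    finally show ?thesis .
  qed
  have "ln X = \<theta> * ln L + ln 5 - lt" unfolding X_def lt_def t_def using L0 t16 t_def
    by (simp add: ln_div ln_mult ln_powr)
  also have "\<theta> * ln L \<le> (\<alpha> + g) * ln L" using thle' lnL0 by (intro mult_right_mono) auto
  also have "(\<alpha> + g) * ln L = \<alpha> * t + \<alpha> * ln l + g * ln L" using lnL_eq by (simp add: algebra_simps)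
  finally have s1: "ln X \<le> \<alpha> * t + \<alpha> * ln l + g * ln L + ln 5 - lt" by simp
  have s2: "\<alpha> * ln l \<le> 1/2 * ln l" using al_half lnl0 by (intro mult_right_mono) auto
  have "g * ln L \<le> g * (l + ln l)" using g0 lnL by (intro mult_left_mono) auto
  hence s3: "g * ln L \<le> c' + ln l + c' + 4" using gl glnl by (simp add: algebra_simps)
  have s4: "(1/2 + \<epsilon>) * (ln b - ln 2) \<le> (1/2 + \<epsilon>) * lt" using eps lnb_lt by (intro mult_left_mono) auto
  have "ln X \<le> 2 * c' + 11 + (1/2 + \<epsilon>) * ln 2 + t / 2 - (1/2 + \<epsilon>) * ln b"
    using s1 s2 s3 s4 al_t lnl_lt ln_facts(2) by (simp add: algebra_simps)
  hence "ln X \<le> ln (exp (2 * c' + 11 + (1/2 + \<epsilon>) * ln 2)) + ln u / 2 - (1/2 + \<epsilon>) * ln (ln (2*u))"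
    unfolding t_def b_def by simp
  hence "X \<le> exp (2 * c' + 11 + (1/2 + \<epsilon>) * ln 2) * sqrt u / ln (2*u) powr (1/2 + \<epsilon>)"
    using X0 u1 by (intro log_bound) auto
  with D1 show ?thesis by linarith
qed

lemma case1a_core:
  fixes \<epsilon> C u l y w :: real
  assumes eps: "\<epsilon> > 0" and C: "C > 0" and u: "u \<ge> exp 16"
    and l: "l = ln y" and y0: "y > 0" and l1: "l \<ge> 1" and l4: "l \<le> 4 * ln u"
    and y80: "y \<le> 80 * (u * l)" and w0: "w > 0"
    and wC: "w \<le> C * y powr (1/2 - (1 + \<epsilon>) * ln (ln u) / ln u)"
    and Ub: "(1/2 + \<epsilon>) * ln (ln (2*u)) \<le> ln u / 4"
  shows "w \<le> exp (ln C + ln 320 + (1/2 + \<epsilon>) * ln 2) * sqrt u / ln (2*u) powr (1/2 + \<epsilon>)"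
proof -
  note B = basic_u[OF u]
  define t where "t = ln u"
  define lt where "lt = ln (ln u)"
  define b where "b = ln (2*u)"
  define \<alpha> where "\<alpha> = 1/2 - (1 + \<epsilon>) * ln (ln u) / ln u"
  have t16: "t \<ge> 16" unfolding t_def by (rule B(1))
  have lt0: "lt \<ge> 0" unfolding lt_def by (rule B(3))
  have lnb_lt: "ln b \<le> ln 2 + lt" unfolding b_def lt_def by (rule B(6))
  have u1: "u > 1" by (rule B(2))
  have lnl0: "ln l \<ge> 0" using l1 by simp
  have "ln l \<le> ln (4 * t)" using l4 l1 t_def by (subst ln_le_cancel_iff) auto
  also have "\<dots> = ln 4 + lt" unfolding lt_def t_def using t16 t_def by (simp add: ln_mult)
  finally have lnl_lt: "ln l \<le> ln 4 + lt" .
  have al_t: "\<alpha> * t = t/2 - (1 + \<epsilon>) * lt" unfolding \<alpha>_def t_def lt_def using t16 t_def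
    by (simp add: field_simps)
  have "(1 + \<epsilon>) * ln (ln u) / ln u \<ge> 0" using eps lt0 t16 unfolding lt_def t_def by simp
  hence al_half: "\<alpha> \<le> 1/2" unfolding \<alpha>_def by linarith
  have "ln w \<le> ln (C * y powr \<alpha>)" using w0 wC unfolding \<alpha>_def by (subst ln_le_cancel_iff) auto
  also have "\<dots> = ln C + \<alpha> * l" using C y0 l by (simp add: ln_mult ln_powr)
  finally have lw: "ln w \<le> ln C + \<alpha> * l" .
  have key: "\<alpha> * l \<le> ln 320 + (1/2 + \<epsilon>) * ln 2 + t / 2 - (1/2 + \<epsilon>) * ln b"
  proof (cases "\<alpha> \<ge> 0")
    case True
    have "l \<le> ln (80 * (u * l))" unfolding l using y0 y80 l1 l by (subst ln_le_cancel_iff) auto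
    also have "\<dots> = ln 80 + t + ln l" unfolding t_def using u1 l1 by (simp add: ln_mult)
    finally have "\<alpha> * l \<le> \<alpha> * (ln 80 + t + ln l)" using True by (intro mult_left_mono) auto
    also have "\<dots> = \<alpha> * ln 80 + \<alpha> * t + \<alpha> * ln l" by (simp add: algebra_simps)
    also have "\<alpha> * ln 80 \<le> 1/2 * ln 80" using al_half ln_facts(3) by (intro mult_right_mono) auto
    also have "\<alpha> * ln l \<le> 1/2 * ln l" using al_half lnl0 by (intro mult_right_mono) auto
    finally have s1: "\<alpha> * l \<le> 1/2 * ln 80 + \<alpha> * t + 1/2 * ln l" by simp
    have s4: "(1/2 + \<epsilon>) * (ln b - ln 2) \<le> (1/2 + \<epsilon>) * lt" using eps lnb_lt by (intro mult_left_mono) auto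
    have e1: "(1 + \<epsilon>) * lt = lt + \<epsilon> * lt" by (simp add: algebra_simps)
    have e3: "(1/2 + \<epsilon>) * (ln b - ln 2) = (1/2 + \<epsilon>) * ln b - (1/2 + \<epsilon>) * ln 2"
      by (simp add: algebra_simps)
    have e2: "(1/2 + \<epsilon>) * lt = lt / 2 + \<epsilon> * lt" by (simp add: algebra_simps)
    have l40: "ln (4::real) \<ge> 0" by simp
    show ?thesis using s1 s4 al_t lnl_lt ln_facts(3,4) e1 e2 e3 l40 by linarith
  next
    case False
    hence "\<alpha> * l \<le> 0" using l1 by (simp add: mult_nonpos_nonneg)
    moreover have "(1/2 + \<epsilon>) * ln b \<le> t / 4" using Ub unfolding b_def t_def .
    moreover have "ln 320 \<ge> (0::real)" by simp
    moreover have "(1/2 + \<epsilon>) * ln 2 \<ge> 0" using eps by simp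
    ultimately show ?thesis using t16 by linarith
  qed
  have "ln w \<le> ln (exp (ln C + ln 320 + (1/2 + \<epsilon>) * ln 2)) + ln u / 2 - (1/2 + \<epsilon>) * ln (ln (2*u))"
    using lw key unfolding t_def b_def by simp
  thus ?thesis using w0 u1 by (intro log_bound) auto
qed

lemma sqrt_ln: assumes "t \<ge> 1" shows "ln t \<le> 2 * sqrt (t::real)"
proof -
  have s0: "sqrt t > 0" using assms by simp
  have "ln (sqrt t) < sqrt t" using s0 by (rule ln_less_self)
  moreover have "ln (sqrt t) = ln t / 2" using assms by (simp add: ln_sqrt)
  ultimately show ?thesis by simp
qed

lemma Ub_lemma:
  fixes \<epsilon> u :: real
  assumes eps: "\<epsilon> > 0" and u: "u \<ge> exp 16" and t: "ln u \<ge> (6 + 12 * \<epsilon>)^2"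
  shows "(1/2 + \<epsilon>) * ln (ln (2*u)) \<le> ln u / 4"
proof -
  note B = basic_u[OF u]
  define t where "t = ln u"
  have t16: "t \<ge> 16" unfolding t_def by (rule B(1))
  have st: "sqrt t \<ge> 6 + 12 * \<epsilon>" using t unfolding t_def[symmetric] by (rule real_le_rsqrt)
  have st1: "sqrt t \<ge> 1" using t16 by simp
  have "ln (ln (2*u)) \<le> 1 + ln t" using B(6) B(10) unfolding t_def by linarith
  also have "ln t \<le> 2 * sqrt t" using t16 by (intro sqrt_ln) simp
  finally have "ln (ln (2*u)) \<le> 3 * sqrt t" using st1 by linarith
  hence "(1/2 + \<epsilon>) * ln (ln (2*u)) \<le> (1/2 + \<epsilon>) * (3 * sqrt t)" using eps by (intro mult_left_mono) auto
  also have "\<dots> = (6 + 12 * \<epsilon>) / 4 * sqrt t" by (simp add: algebra_simps)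
  also have "\<dots> \<le> sqrt t / 4 * sqrt t" using st st1 by (intro mult_right_mono) auto
  also have "\<dots> = (sqrt t * sqrt t) / 4" by simp
  also have "sqrt t * sqrt t = t" using t16 by simp
  finally show ?thesis unfolding t_def .
qed

lemma l_le_4t:
  fixes l t :: real
  assumes l1: "l \<ge> 1" and t: "t \<ge> 16" and h: "l \<le> 2 * t + 2 * ln l"
  shows "l \<le> 4 * t"
proof (cases "l \<le> 64")
  case True thus ?thesis using t by simp
next
  case False
  hence "(8::real)^2 \<le> l" by simp
  hence sl: "sqrt l \<ge> 8" by (rule real_le_rsqrt)
  have "ln l \<le> 2 * sqrt l" using l1 by (rule sqrt_ln)
  moreover have "8 * sqrt l \<le> sqrt l * sqrt l" using sl l1 by (intro mult_right_mono) auto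
  moreover have "sqrt l * sqrt l = l" using l1 by simp
  ultimately show ?thesis using h by linarith
qed

lemma regionA1:
  fixes y u U0 :: real
  assumes y: "y \<ge> 2" and u1: "1 \<le> u" and uU: "u \<le> U0" and h: "y \<le> (u * ln y)^2"
  shows "y \<le> 256 * U0^4"
proof -
  define s where "s = sqrt (sqrt y)"
  have s0: "s > 0" unfolding s_def using y by simp
  have "ln s = ln y / 4" unfolding s_def using y by (simp add: ln_sqrt)
  moreover have "ln s < s" using s0 by (rule ln_less_self)
  ultimately have ly: "ln y < 4 * s" by simp
  have ly0: "ln y \<ge> 0" using y by simp
  have "(u * ln y)^2 = u^2 * (ln y)^2" by (simp add: power_mult_distrib)
  also have "\<dots> \<le> U0^2 * (4 * s)^2" using u1 uU ly ly0
    by (intro mult_mono power_mono) auto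
  also have "(4 * s)^2 = 16 * sqrt y" unfolding s_def using y by (simp add: power_mult_distrib)
  finally have F: "(u * ln y)^2 \<le> U0^2 * (16 * sqrt y)" .
  have "sqrt y * sqrt y = y" using y by simp
  also have "y \<le> (u * ln y)^2" by (rule h)
  also note F
  also have "U0^2 * (16 * sqrt y) = (16 * U0^2) * sqrt y" by (simp only: mult.assoc[symmetric] mult.commute[of "U0^2" 16])
  finally have "sqrt y * sqrt y \<le> (16 * U0^2) * sqrt y" .
  moreover have sp: "sqrt y > 0" using y by simp
  ultimately have "sqrt y \<le> 16 * U0^2" by (rule mult_right_le_imp_le)
  hence "(sqrt y)^2 \<le> (16 * U0^2)^2" using sp by (intro power_mono) auto
  moreover have "(sqrt y)^2 = y" using y by simp
  moreover have "(16 * U0^2)^2 = 256 * U0^4" by (simp add: power_mult_distrib)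
  ultimately show ?thesis by simp
qed

lemma regionA2:
  fixes \<theta> u U0 :: real
  assumes th0: "\<theta> > 0" and th1: "\<theta> \<le> 1" and u1: "1 \<le> u" and uU: "u \<le> U0"
  shows "\<theta> * (u * ln (2*u)) powr \<theta> / (1 + \<theta> * ln (2*u)) \<le> 1 + U0^2"
proof -
  define a where "a = u * ln (2*u)"
  have b0: "ln (2*u) > 0" using u1 by simp
  have bu: "ln (2*u) \<le> u"
  proof -
    have "ln u \<le> u - 1" using u1 by (intro ln_le_minus_one) auto
    moreover have "ln (2*u) = ln 2 + ln u" using u1 by (simp add: ln_mult)
    moreover have "ln (2::real) \<le> 1" using ln_le_minus_one[of 2] by simp
    ultimately show ?thesis by simp
  qed
  have a0: "a > 0" unfolding a_def using u1 b0 by simp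
  have "a \<le> u * u" unfolding a_def using bu u1 by (intro mult_left_mono) auto
  also have "\<dots> \<le> U0 * U0" using u1 uU by (intro mult_mono) auto
  finally have aU: "a \<le> U0^2" by (simp add: power2_eq_square)
  have pa: "a powr \<theta> \<le> 1 + U0^2"
  proof (cases "a \<ge> 1")
    case True
    hence "a powr \<theta> \<le> a powr 1" using th1 by (intro powr_mono) auto
    thus ?thesis using aU a0 by simp
  next
    case False
    hence "a powr \<theta> \<le> 1 powr \<theta>" using a0 th0 by (intro powr_mono2) auto
    hence "a powr \<theta> \<le> 1" by simp
    thus ?thesis using zero_le_power2[of U0] by linarith
  qed
  have "\<theta> * ln (2*u) > 0" using th0 b0 by simp
  hence "\<theta> / (1 + \<theta> * ln (2*u)) \<le> 1" using th0 th1 by (simp add: divide_simps)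
  hence "\<theta> / (1 + \<theta> * ln (2*u)) * a powr \<theta> \<le> 1 * (1 + U0^2)" using pa
    by (intro mult_mono) auto
  thus ?thesis unfolding a_def by simp
qed

lemma lowerR:
  fixes Kc u U0 \<epsilon> :: real
  assumes Kc: "Kc \<ge> 0" and u1: "1 \<le> u" and uU: "u \<le> U0" and eps: "\<epsilon> > 0"
  shows "Kc / ln (2*U0) powr (1/2 + \<epsilon>) \<le> Kc * sqrt u / ln (2*u) powr (1/2 + \<epsilon>)"
proof -
  have b0: "ln (2*u) > 0" using u1 by simp
  have "ln (2*u) \<le> ln (2*U0)" using u1 uU by simp
  hence p: "ln (2*u) powr (1/2 + \<epsilon>) \<le> ln (2*U0) powr (1/2 + \<epsilon>)" using b0 eps by (intro powr_mono2) auto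
  have p0: "ln (2*u) powr (1/2 + \<epsilon>) > 0" using b0 by simp
  have p1: "ln (2*U0) powr (1/2 + \<epsilon>) > 0" using u1 uU by simp
  have "Kc / ln (2*U0) powr (1/2 + \<epsilon>) \<le> Kc / ln (2*u) powr (1/2 + \<epsilon>)"
    using p p0 p1 Kc by (intro divide_left_mono) auto
  also have "\<dots> \<le> Kc * sqrt u / ln (2*u) powr (1/2 + \<epsilon>)"
  proof -
    have "Kc * 1 \<le> Kc * sqrt u" using u1 Kc by (intro mult_left_mono) auto
    thus ?thesis using p0 by (intro divide_right_mono) auto
  qed
  finally show ?thesis .
qed

lemma Rmono:
  fixes Kc K u \<epsilon> :: real
  assumes "Kc \<le> K" and "u \<ge> 1"
  shows "Kc * sqrt u / ln (2*u) powr (1/2 + \<epsilon>) \<le> K * sqrt u / ln (2*u) powr (1/2 + \<epsilon>)"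
proof -
  have "Kc * sqrt u \<le> K * sqrt u" using assms by (intro mult_right_mono) auto
  moreover have "ln (2*u) powr (1/2 + \<epsilon>) \<ge> 0" by simp
  ultimately show ?thesis by (rule divide_right_mono)
qed

lemma addb: "(x::real) \<le> a * 1 \<Longrightarrow> c + a \<le> M \<Longrightarrow> c + x \<le> M" by linarith

theorem mainTheorem6:
  fixes \<epsilon> C :: real
  assumes "\<epsilon> > 0" and "C > 0"
  shows "\<exists>K>0. \<forall>(x::real) (y::real) (q::nat).
     2 \<le> y \<and> y \<le> x \<and> psi y > 2 * ln x \<and> 1 \<le> q \<and>
     (\<forall>p\<in>prime_factors q. real p \<le> y) \<and>
     real (omega q) \<le> C * y powr (1/2 - (1 + \<epsilon>) * ln (ln (u_of x y)) / ln (u_of x y))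
     \<longrightarrow> D x y q \<le> K * sqrt (u_of x y) / (ln (2 * u_of x y)) powr (1/2 + \<epsilon>)"
proof -
  note eps = assms(1) and C0 = assms(2)
  define U0 where "U0 = exp (max 16 ((6 + 12 * \<epsilon>)^2))"
  define c' where "c' = ln 18 + \<bar>ln C\<bar>"
  define KA where "KA = (256 * U0^4 + U0^2 + 1) * ln (2*U0) powr (1/2 + \<epsilon>)"
  define \<Lambda> where "\<Lambda> = 2 * c' + 400 + 2 * \<epsilon>"
  define KB where "KB = exp \<Lambda>"
  define K where "K = KA + KB"
  have U0e: "U0 \<ge> exp 16" unfolding U0_def by simp
  have U0t: "ln U0 \<ge> (6 + 12 * \<epsilon>)^2" unfolding U0_def by simp
  have U01: "U0 \<ge> 1" using U0e by (smt (verit) one_le_exp_iff)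
  have c'0: "c' \<ge> 0" unfolding c'_def using abs_ge_zero[of "ln C"] ln_ge_zero[of 18] by linarith
  have l18: "ln (18::real) \<ge> 0" by simp
  have lC: "ln C \<le> c'" unfolding c'_def using abs_ge_self[of "ln C"] l18 by linarith
  have l2: "ln (2::real) \<le> 1" using ln_le_minus_one[of 2] by simp
  have l2p: "ln (2::real) \<ge> 0" by simp
  have l320: "ln (320::real) \<le> 319" using ln_le_minus_one[of 320] by simp
  have \<Lambda>0: "\<Lambda> \<ge> 0" unfolding \<Lambda>_def using c'0 eps by simp
  have KA0: "KA > 0" unfolding KA_def using U01 by (simp add: add_pos_nonneg)
  have KB1: "KB \<ge> 1" unfolding KB_def using \<Lambda>0 by simp
  have K0: "K > 0" unfolding K_def using KA0 KB1 by simp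
  have KAK: "KA \<le> K" and KBK: "KB \<le> K" unfolding K_def using KA0 KB1 by auto
  have expK: "exp c0 \<le> K" if "c0 \<le> \<Lambda>" for c0
  proof -
    have "exp c0 \<le> exp \<Lambda>" using that by simp
    moreover have "KB = exp \<Lambda>" by (rule KB_def)
    ultimately show ?thesis using KBK by linarith
  qed
  show ?thesis
  proof (intro exI[of _ K] conjI allI impI K0)
    fix x y :: real and q :: nat
    assume H: "2 \<le> y \<and> y \<le> x \<and> psi y > 2 * ln x \<and> 1 \<le> q \<and>
     (\<forall>p\<in>prime_factors q. real p \<le> y) \<and>
     real (omega q) \<le> C * y powr (1/2 - (1 + \<epsilon>) * ln (ln (u_of x y)) / ln (u_of x y))"
    hence y2: "2 \<le> y" and yx: "y \<le> x" and psiL: "psi y > 2 * ln x" and q1: "1 \<le> q"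
      and P: "\<forall>p\<in>prime_factors q. real p \<le> y"
      and wC: "real (omega q) \<le> C * y powr (1/2 - (1 + \<epsilon>) * ln (ln (u_of x y)) / ln (u_of x y))"
      by auto
    define u where "u = u_of x y"
    define L where "L = ln x"
    define l where "l = ln y"
    define w where "w = real (omega q)"
    define z where "z = real (z_q q)"
    define \<theta> where "\<theta> = theta_q y q"
    define R where "R = (\<lambda>Kc. Kc * sqrt u / ln (2*u) powr (1/2 + \<epsilon>))"
    have goal_eq: "K * sqrt (u_of x y) / (ln (2 * u_of x y)) powr (1/2 + \<epsilon>) = R K"
      unfolding R_def u_def by simp
    have l0: "l > 0" unfolding l_def using y2 by simp
    have l35: "l \<ge> ln 2" unfolding l_def using y2 by simp
    have Ll: "L \<ge> l" unfolding L_def l_def using y2 yx by simp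
    have u_eq: "u = L / l" unfolding u_def u_of_def L_def l_def by simp
    have L_eq: "L = u * l" unfolding u_eq using l0 by simp
    have u1: "u \<ge> 1" unfolding u_eq using Ll l0 by simp
    have w0: "w \<ge> 0" unfolding w_def by simp
    have wy: "w \<le> y" unfolding w_def by (rule omega_le_y[OF y2 q1 P])
    note ZF = z_facts[OF y2 q1 P]
    have z2: "z \<ge> 2" unfolding z_def using ZF(1) by simp
    have zy: "z \<le> y" unfolding z_def using ZF(2) by simp
    have wz: "w \<le> z" unfolding w_def z_def using ZF(4) by simp
    have th_eq: "\<theta> = ln z / l" unfolding \<theta>_def theta_q_def z_def l_def by simp
    have lnz: "ln z \<ge> ln 2" using z2 by simp
    have lnz0: "ln z > 0" using z2 by simp
    have th0: "\<theta> > 0" unfolding th_eq using lnz0 l0 by simp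
    have th1: "\<theta> \<le> 1" unfolding th_eq using zy z2 l0 unfolding l_def by simp
    have thl: "\<theta> * l = ln z" unfolding th_eq using l0 by simp
    have psi_le: "psi y \<le> y * l"
    proof -
      have "psi y \<le> real (card {p::nat. prime p \<and> real p \<le> y}) * ln y"
        using y2 by (intro psi_le_pi) auto
      also have "card {p::nat. prime p \<and> real p \<le> y} = pic (nat \<lfloor>y\<rfloor>)"
        unfolding pic_def using primes_real_eq[of y] y2 by simp
      also have "real (pic (nat \<lfloor>y\<rfloor>)) \<le> y" using pic_le[of "nat \<lfloor>y\<rfloor>"] y2 by linarith
      finally show ?thesis unfolding l_def using y2 by (simp add: mult_right_mono)
    qed
    have Dle_w: "D x y q \<le> w" unfolding D_def w_def by simp
    have Dle_Delta: "D x y q \<le> Delta x y q" unfolding D_def by simp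
    have Delta1: "y \<le> L^2 \<Longrightarrow> Delta x y q = L powr \<theta> / l * (1 + 1 / (\<theta> * ln (1 + eta x y)))"
      unfolding Delta_def Let_def L_def l_def \<theta>_def using psiL by simp
    have Delta2: "\<not> y \<le> L^2 \<Longrightarrow> Delta x y q = \<theta> * (u * ln (2*u)) powr \<theta> / (1 + \<theta> * ln (2*u))"
      unfolding Delta_def Let_def L_def \<theta>_def u_def by simp
    have Rpos: "R 1 \<ge> 0" unfolding R_def using u1 by (intro divide_nonneg_nonneg) auto
    have main: "D x y q \<le> R K"
    proof (cases "u \<le> U0")
      case True
      have bound: "D x y q \<le> 256 * U0^4 + U0^2 + 1"
      proof (cases "y \<le> L^2")
        case True
        have "y \<le> (u * ln y)^2" using True unfolding L_eq l_def .
        hence "y \<le> 256 * U0^4" using regionA1[OF y2 u1 \<open>u \<le> U0\<close>] by simp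
        thus ?thesis using Dle_w wy zero_le_power2[of U0] by linarith
      next
        case False
        have "Delta x y q \<le> 1 + U0^2" unfolding Delta2[OF False]
          by (rule regionA2[OF th0 th1 u1 \<open>u \<le> U0\<close>])
        moreover have "U0^4 \<ge> 0" by simp
        ultimately show ?thesis using Dle_Delta by linarith
      qed
      have "R KA \<ge> KA / ln (2*U0) powr (1/2 + \<epsilon>)" unfolding R_def
        using KA0 u1 True eps by (intro lowerR) auto
      moreover have "KA / ln (2*U0) powr (1/2 + \<epsilon>) = 256 * U0^4 + U0^2 + 1"
      proof -
        have "ln (2*U0) powr (1/2 + \<epsilon>) > 0" using U01 by simp
        thus ?thesis unfolding KA_def by simp
      qed
      moreover have "R KA \<le> R K" unfolding R_def using KAK u1 by (rule Rmono)
      ultimately show ?thesis using bound by linarith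
    next
      case False
      hence uU: "u \<ge> U0" by simp
      have ue: "u \<ge> exp 16" using uU U0e by simp
      have ut: "ln u \<ge> (6 + 12 * \<epsilon>)^2"
      proof -
        have "ln U0 \<le> ln u" using uU U01 by simp
        thus ?thesis using U0t by simp
      qed
      note B = basic_u[OF ue]
      have Ub: "(1/2 + \<epsilon>) * ln (ln (2*u)) \<le> ln u / 4" by (rule Ub_lemma[OF eps ue ut])
      have R1K: "R 1 \<le> R K" unfolding R_def using KB1 KBK u1 by (intro Rmono) auto
      show ?thesis
      proof (cases "w = 0")
        case True
        hence "D x y q \<le> 0" using Dle_w by simp
        moreover have "R K \<ge> 0" unfolding R_def using K0 u1 by (intro divide_nonneg_nonneg) auto
        ultimately show ?thesis by linarith
      next
        case False
        hence wpos: "w > 0" using w0 by simp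
        hence om1: "omega q \<ge> 1" unfolding w_def by simp
        show ?thesis
        proof (cases "ln w \<le> ln 1 + ln u / 2 - (1/2 + \<epsilon>) * ln (ln (2*u))")
          case True
          have "w \<le> R 1" unfolding R_def using wpos B(2) True by (intro log_bound) auto
          thus ?thesis using Dle_w R1K by linarith
        next
          case False
          hence lnw: "ln w \<ge> ln u / 4" using Ub ln_one[where ?'a=real] by linarith
          define \<alpha> where "\<alpha> = 1/2 - (1 + \<epsilon>) * ln (ln u) / ln u"
          have wC': "w \<le> C * y powr \<alpha>" using wC unfolding w_def \<alpha>_def u_def .
          have lnwC: "ln w \<le> ln C + \<alpha> * l"
          proof -
            have "ln w \<le> ln (C * y powr \<alpha>)" using wpos wC' by (subst ln_le_cancel_iff) auto
            also have "\<dots> = ln C + \<alpha> * l" using C0 y2 unfolding l_def by (simp add: ln_mult ln_powr)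
            finally show ?thesis .
          qed
          have z18: "z \<le> 18 * w * l" using ZF(3)[OF om1] unfolding z_def w_def l_def .
          have lnz_le: "ln z \<le> c' + \<alpha> * l + ln l"
          proof -
            have "ln z \<le> ln (18 * w * l)" using z18 z2 wpos l0 by (subst ln_le_cancel_iff) auto
            also have "\<dots> = ln 18 + ln w + ln l" using wpos l0 by (simp add: ln_mult)
            finally show ?thesis using lnwC lC unfolding c'_def by linarith
          qed
          have thle: "\<theta> \<le> \<alpha> + (c' + ln l) / l"
          proof -
            have "\<theta> = ln z / l" by (rule th_eq)
            also have "\<dots> \<le> (c' + \<alpha> * l + ln l) / l" using lnz_le l0 by (intro divide_right_mono) auto
            also have "\<dots> = \<alpha> + (c' + ln l) / l" using l0 by (simp add: field_simps)
            finally show ?thesis .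
          qed
          show ?thesis
          proof (cases "y \<le> L^2")
            case False
            have L0: "L > 0" using L_eq ue l0 B(2) by simp
            have "ln y > ln (L^2)" using False L0 y2 by (subst ln_less_cancel_iff) auto
            hence lL: "l > 2 * ln L" unfolding l_def using L0 by (simp add: ln_realpow)
            have lnL_eq: "ln L = ln u + ln l" unfolding L_eq using B(2) l0 by (simp add: ln_mult)
            have "L \<ge> u * ln 2" unfolding L_eq using l35 B(2) by (intro mult_left_mono) auto
            moreover have "u * ln 2 \<ge> u * (1/2)" using B(12) B(2) by (intro mult_left_mono) auto
            moreover have "exp (16::real) \<ge> 1 + 16" by (rule exp_ge_add_one_self)
            ultimately have L8: "L \<ge> 8" using ue by linarith
            have "ln L \<ge> ln 8" using L8 by (subst ln_le_cancel_iff) auto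
            moreover have "ln ((2::real)^3) = real 3 * ln 2" by (rule ln_realpow)
            ultimately have "ln L \<ge> 1" using B(12) by simp
            hence l1: "l \<ge> 1" using lL by linarith
            hence "ln l \<ge> 0" by simp
            hence l2t: "l > 2 * ln u" using lL lnL_eq by linarith
            have "Delta x y q \<le> exp (c' + (1 + \<epsilon>) * ln 2) * sqrt u / ln (2*u) powr (1/2 + \<epsilon>)"
              unfolding Delta2[OF False]
              by (rule case2_core[OF eps c'0 ue l2t l1 th0]) (use thle \<alpha>_def in simp)
            also have "\<dots> \<le> R K" unfolding R_def using u1
            proof (intro Rmono)
              have a: "(1 + \<epsilon>) * ln 2 \<le> (1 + \<epsilon>) * 1" using l2 eps by (intro mult_left_mono) auto
              show "exp (c' + (1 + \<epsilon>) * ln 2) \<le> K"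
                by (rule expK, rule addb[OF a]) (insert c'0 eps \<Lambda>_def, linarith)
            qed
            finally show ?thesis using Dle_Delta by linarith
          next
            case True
            have yu: "y > 2 * u"
            proof -
              have "(2 * u) * l < y * l" using psiL psi_le L_eq L_def by linarith
              thus ?thesis by (rule mult_right_less_imp_less) (use l0 in simp)
            qed
            have "exp (16::real) \<ge> 1 + 16" by (rule exp_ge_add_one_self)
            hence y4: "y \<ge> 4" using yu ue by linarith
            have ltl: "ln u \<le> l" unfolding l_def using yu B(2) by (subst ln_le_cancel_iff) auto
            have l16: "l \<ge> 16" using ltl B(1) by simp
            have lnL_eq: "ln L = ln u + ln l" unfolding L_eq using B(2) l0 by (simp add: ln_mult)
            have L0: "L > 0" using L_eq B(2) l0 by simp
            have "ln y \<le> ln (L^2)" using True y2 by (subst ln_le_cancel_iff) auto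
            hence "l \<le> 2 * ln L" unfolding l_def using L0 by (simp add: ln_realpow)
            hence "l \<le> 2 * ln u + 2 * ln l" using lnL_eq by linarith
            hence l4: "l \<le> 4 * ln u" using l16 B(1) by (intro l_le_4t) auto
            show ?thesis
            proof (cases "psi y < 5 * L")
              case True
              have "y / 16 \<le> psi y" using psi_lower[OF y4] .
              hence y80: "y \<le> 80 * (u * l)" using True L_eq by linarith
              have "w \<le> exp (ln C + ln 320 + (1/2 + \<epsilon>) * ln 2) * sqrt u / ln (2*u) powr (1/2 + \<epsilon>)"
                by (rule case1a_core[OF eps C0 ue l_def _ _ l4 y80 wpos _ Ub])
                  (use y2 l16 wC' \<alpha>_def in simp_all)
              also have "\<dots> \<le> R K" unfolding R_def using u1
              proof (intro Rmono)
                have a: "(1/2 + \<epsilon>) * ln 2 \<le> (1/2 + \<epsilon>) * 1" using l2 eps by (intro mult_left_mono) auto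
                show "exp (ln C + ln 320 + (1/2 + \<epsilon>) * ln 2) \<le> K"
                  by (rule expK, rule addb[OF a]) (insert lC c'0 eps l320 \<Lambda>_def, linarith)
              qed
              finally show ?thesis using Dle_w by linarith
            next
              case False
              have L0': "ln x > 0" using L0 unfolding L_def .
              have "psi y \<ge> 5 * ln x" using False L_def by linarith
              hence "psi y / ln x \<ge> 5" using L0' by (simp add: le_divide_eq)
              hence eta3: "eta x y \<ge> 3" unfolding eta_def by linarith
              have "ln (1 + eta x y) \<ge> ln 4" using eta3 by (subst ln_le_cancel_iff) auto
              moreover have "ln (4::real) \<ge> 1" using B(12) ln_mult[of 2 2] by simp
              ultimately have eta1: "ln (1 + eta x y) \<ge> 1" by simp
              have lnLl: "ln L \<le> l + ln l"
              proof -
                have "L \<le> y * l" using psiL psi_le L0 L_def by linarith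
                moreover have "y * l > 0" using y2 l0 by simp
                ultimately have "ln L \<le> ln (y * l)" using L0 by (subst ln_le_cancel_iff) auto
                also have "\<dots> = l + ln l" using y2 l0 unfolding l_def by (simp add: ln_mult)
                finally show ?thesis .
              qed
              have "ln z \<ge> ln w" using wz wpos by simp
              hence thl4: "\<theta> * l \<ge> ln u / 4" using thl lnw by linarith
              have "Delta x y q \<le> exp (2 * c' + 11 + (1/2 + \<epsilon>) * ln 2) * sqrt u / ln (2*u) powr (1/2 + \<epsilon>)"
                unfolding Delta1[OF True]
                by (rule case1b_core[OF eps c'0 ue ltl l4 L_eq lnLl th0 _ thl4 eta1]) (use thle \<alpha>_def in simp)
              also have "\<dots> \<le> R K" unfolding R_def using u1
              proof (intro Rmono)
                have a: "(1/2 + \<epsilon>) * ln 2 \<le> (1/2 + \<epsilon>) * 1" using l2 eps by (intro mult_left_mono) auto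
                show "exp (2 * c' + 11 + (1/2 + \<epsilon>) * ln 2) \<le> K"
                  by (rule expK, rule addb[OF a]) (insert c'0 eps \<Lambda>_def, linarith)
              qed
              finally show ?thesis using Dle_Delta by linarith
            qed
          qed
        qed
      qed
    qed
    thus "D x y q \<le> K * sqrt (u_of x y) / (ln (2 * u_of x y)) powr (1/2 + \<epsilon>)"
      using goal_eq by simp
  qed
qed

end
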